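(* Let $d\ge1$, $\lambda>0$, $\delta>0$, and let $f:\mathbb{R}^d\to\mathbb{R}$ be convex and satisfy: (A1) $f$ is continuous and has at least one minimizer; (A2) $\int_{\mathbb{R}^d}\exp(-f(y)/\delta)\,dy<+\infty$. Then for every $x\in\mathbb{R}^d$, \[\nabla f^{\lambda,\delta}(x)\in\partial_{d\delta}f\big(\operatorname{zprox}^\delta_{\lambda,f}(x)\big).\] Consequently, for the ZOPPA sequence $(x^k)$ and $X^\star=\operatorname{argmin}f$, for all $k\ge1$, \[f(x^k)-\min_yf(y)\le\|\nabla f^{\lambda,\delta}(x^{k-1})\|\operatorname{dist}(x^k,X^\star)+d\delta.\]
   Context: For $\varepsilon\ge0$, the $\varepsilon$-subdifferential is $\partial_\varepsilon f(z)=\{g\in\mathbb{R}^d: f(y)\ge f(z)+\langle g,y-z\rangle-\varepsilon\ \forall y\in\mathbb{R}^d\}$. The zeroth-order proximal operator is $\operatorname{zprox}^\delta_{\lambda,f}(x)=\dfrac{\mathbb{E}_{y\sim\mathcal N(x,\lambda\delta I)}[y\exp(-f(y)/\delta)]}{\mathbb{E}_{y\sim\mathcal N(x,\lambda\delta I)}[\exp(-f(y)/\delta)]}$; the soft Moreau envelope is $f^{\lambda,\delta}(x)=-\delta\log\mathbb{E}_{y\sim\mathcal N(x,\lambda\delta I)}[\exp(-f(y)/\delta)]$. ZOPPA: $x^{k+1}=\operatorname{zprox}^\delta_{\lambda,f}(x^k)$ from any $x^0$. *)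

theory Defs
  imports "HOL-Analysis.Analysis"
begin

definition gauss_density :: "real \<Rightarrow> 'a::euclidean_space \<Rightarrow> 'a \<Rightarrow> real" where
  "gauss_density s x y =
     (2 * pi * s) powr (- real DIM('a) / 2) * exp (- (norm (y - x))\<^sup>2 / (2 * s))"

definition eps_subdiff :: "('a::euclidean_space \<Rightarrow> real) \<Rightarrow> real \<Rightarrow> 'a \<Rightarrow> 'a set" where
  "eps_subdiff f \<epsilon> z = {g. \<forall>y. f y \<ge> f z + inner g (y - z) - \<epsilon>}"

definition zprox :: "real \<Rightarrow> real \<Rightarrow> ('a::euclidean_space \<Rightarrow> real) \<Rightarrow> 'a \<Rightarrow> 'a" where
  "zprox \<delta> lam f x =
     (integral\<^sup>L lborel (\<lambda>y. (gauss_density (lam * \<delta>) x y * exp (- f y / \<delta>)) *\<^sub>R y))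
     /\<^sub>R (integral\<^sup>L lborel (\<lambda>y. gauss_density (lam * \<delta>) x y * exp (- f y / \<delta>)))"

definition soft_moreau :: "real \<Rightarrow> real \<Rightarrow> ('a::euclidean_space \<Rightarrow> real) \<Rightarrow> 'a \<Rightarrow> real" where
  "soft_moreau lam \<delta> f x =
     - \<delta> * ln (integral\<^sup>L lborel (\<lambda>y. gauss_density (lam * \<delta>) x y * exp (- f y / \<delta>)))"

end

theory Submission
  imports Defs
begin


lemma exp_quad_aux:
  fixes a :: real
  shows "0 \<le> exp a - 1 - a" "exp a - 1 - a \<le> a\<^sup>2 * exp \<bar>a\<bar>"
proof -
  show "0 \<le> exp a - 1 - a" using exp_ge_add_one_self[of a] by linarith
  have e1: "exp (-a) \<ge> 1 - a" using exp_ge_add_one_self[of "-a"] by simp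
  have "exp a * exp (-a) = 1" by (simp add: exp_minus)
  moreover have "exp a * (1 - a) \<le> exp a * exp (-a)" using e1 by (simp add: mult_left_mono)
  ultimately have "exp a * (1 - a) \<le> 1" by simp
  then have h1: "exp a - 1 - a \<le> a * (exp a - 1)" by (simp add: algebra_simps)
  have h2: "a * (exp a - 1) \<le> a\<^sup>2 * exp \<bar>a\<bar>"
  proof (cases "a \<ge> 0")
    case True
    have "exp a - 1 \<le> a * exp a"
    proof -
      have "exp a * (1 - a) \<le> exp a * exp (-a)" using e1 by (simp add: mult_left_mono)
      then show ?thesis using \<open>exp a * exp (-a) = 1\<close> by (simp add: algebra_simps)
    qed
    then have "a * (exp a - 1) \<le> a * (a * exp a)" using True mult_left_mono by blast
    then show ?thesis using True by (simp add: power2_eq_square)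
  next
    case False
    have "1 - exp a \<le> -a" using exp_ge_add_one_self[of a] by linarith
    moreover have "0 \<le> 1 - exp a" using False by simp
    ultimately have "(-a) * (1 - exp a) \<le> (-a) * (-a)" using False by (intro mult_left_mono) auto
    moreover have "(-a)*(-a) \<le> a\<^sup>2 * exp \<bar>a\<bar>"
      using False by (simp add: power2_eq_square)
    ultimately show ?thesis by (simp add: algebra_simps)
  qed
  from h1 h2 show "exp a - 1 - a \<le> a\<^sup>2 * exp \<bar>a\<bar>" by simp
qed

lemma sq_exp_bound:
  fixes r s :: real assumes s: "s > 0"
  shows "r\<^sup>2 * exp (- r\<^sup>2 / s) \<le> s"
proof -
  define X where "X = r\<^sup>2 / s"
  have "X \<le> exp X" using exp_ge_add_one_self[of X] by linarith
  then have "X * exp (-X) \<le> 1" by (simp add: exp_minus field_simps)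
  then have "s * (X * exp (-X)) \<le> s * 1" using s by (intro mult_left_mono) auto
  moreover have "r\<^sup>2 * exp (- r\<^sup>2 / s) = s * (X * exp (-X))" using s by (simp add: X_def)
  ultimately show ?thesis by simp
qed

lemma lin_exp_bound:
  fixes r s :: real assumes s: "s > 0"
  shows "\<bar>r\<bar> * exp (- r\<^sup>2 / s) \<le> 1 + s"
proof -
  have rr: "\<bar>r\<bar> * \<bar>r\<bar> = r\<^sup>2" by (simp add: power2_eq_square)
  have "\<bar>r\<bar> \<le> 1 + r\<^sup>2"
  proof (cases "\<bar>r\<bar> \<le> 1")
    case True then show ?thesis by (simp add: add_increasing2)
  next
    case False
    then have "\<bar>r\<bar> * 1 \<le> \<bar>r\<bar> * \<bar>r\<bar>" by (intro mult_left_mono) auto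
    then show ?thesis using rr by simp
  qed
  then have "\<bar>r\<bar> * exp (- r\<^sup>2 / s) \<le> (1 + r\<^sup>2) * exp (- r\<^sup>2 / s)"
    by (simp add: mult_right_mono)
  also have "\<dots> = exp (- r\<^sup>2 / s) + r\<^sup>2 * exp (- r\<^sup>2 / s)" by (simp add: algebra_simps)
  also have "\<dots> \<le> 1 + s"
  proof -
    have "- r\<^sup>2 / s \<le> 0" using s by (simp add: divide_nonpos_pos)
    then have "exp (- r\<^sup>2 / s) \<le> 1" by simp
    then show ?thesis using sq_exp_bound[OF s, of r] by linarith
  qed
  finally show ?thesis .
qed

lemma nn_integral_affine_eu:
  fixes g :: "'a::euclidean_space \<Rightarrow> ennreal" and c :: real and a :: 'a
  assumes [measurable]: "g \<in> borel_measurable borel" and c: "c \<noteq> 0"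
  shows "(\<integral>\<^sup>+x. g x \<partial>lborel) = \<bar>c\<bar>^DIM('a) * (\<integral>\<^sup>+x. g (a + c *\<^sub>R x) \<partial>lborel)"
  by (subst lborel_affine[OF c, of a])
     (simp add: nn_integral_density nn_integral_distr nn_integral_cmult)

lemma lborel_integrable_affine_eu:
  fixes g :: "'a::euclidean_space \<Rightarrow> real"
  assumes g: "integrable lborel g" and c: "c \<noteq> 0"
  shows "integrable lborel (\<lambda>x. g (a + c *\<^sub>R x))"
proof -
  have [measurable]: "g \<in> borel_measurable borel" using g by auto
  have "(\<integral>\<^sup>+x. ennreal (norm (g x)) \<partial>lborel) < \<infinity>" using g by (simp add: integrable_iff_bounded)
  then have "\<bar>c\<bar>^DIM('a) * (\<integral>\<^sup>+x. ennreal (norm (g (a + c *\<^sub>R x))) \<partial>lborel) < \<infinity>"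
    using nn_integral_affine_eu[of "\<lambda>x. ennreal (norm (g x))" c a] c by simp
  moreover have "(\<bar>c\<bar>^DIM('a) :: ennreal) \<noteq> 0" using c by simp
  ultimately have "(\<integral>\<^sup>+x. ennreal (norm (g (a + c *\<^sub>R x))) \<partial>lborel) < \<infinity>"
    by (auto simp: ennreal_mult_less_top)
  then show ?thesis by (simp add: integrable_iff_bounded)
qed

lemma lborel_integral_affine_eu:
  fixes g :: "'a::euclidean_space \<Rightarrow> real"
  assumes g: "integrable lborel g" and c: "c \<noteq> 0"
  shows "integral\<^sup>L lborel g = \<bar>c\<bar>^DIM('a) * (\<integral>x. g (a + c *\<^sub>R x) \<partial>lborel)"
proof -
  have [measurable]: "g \<in> borel_measurable borel" using g by auto
  define T where "T = (\<lambda>x::'a. a + c *\<^sub>R x)"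
  have Tm[measurable]: "T \<in> borel_measurable borel" unfolding T_def by measurable
  have eq: "lborel = density (distr lborel borel T) (\<lambda>_. \<bar>c\<bar>^DIM('a))"
    using lborel_affine[OF c, of a] unfolding T_def .
  have "integral\<^sup>L lborel g = integral\<^sup>L (density (distr lborel borel T) (\<lambda>_. \<bar>c\<bar>^DIM('a))) g"
    using eq by (rule arg_cong)
  also have "\<dots> = integral\<^sup>L (distr lborel borel T) (\<lambda>x. \<bar>c\<bar>^DIM('a) *\<^sub>R g x)"
    by (rule integral_density) auto
  also have "\<dots> = (\<integral>x. \<bar>c\<bar>^DIM('a) *\<^sub>R g (T x) \<partial>lborel)"
    by (rule integral_distr) auto
  also have "\<dots> = \<bar>c\<bar>^DIM('a) * (\<integral>x. g (a + c *\<^sub>R x) \<partial>lborel)"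
    by (simp add: T_def)
  finally show ?thesis .
qed



locale zsetup =
  fixes f :: "'a::euclidean_space \<Rightarrow> real" and lam \<delta> :: real
  assumes lam: "lam > 0" and del: "\<delta> > 0"
    and cvx: "convex_on UNIV f"
    and cont: "continuous_on UNIV f"
    and minex: "\<exists>x0. \<forall>y. f x0 \<le> f y"
    and integ: "integrable lborel (\<lambda>y. exp (- f y / \<delta>))"
begin

definition "s = lam * \<delta>"
definition "cc = (2 * pi * s) powr (- real DIM('a) / 2)"
definition "W x y = gauss_density s x y * exp (- f y / \<delta>)"
definition "Z x = integral\<^sup>L lborel (W x)"
definition "M x = integral\<^sup>L lborel (\<lambda>y. W x y *\<^sub>R y)"

lemma s_pos: "s > 0" using lam del by (simp add: s_def)
lemma cc_pos: "cc > 0" using s_pos by (simp add: cc_def)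

lemma W_eq: "W x y = cc * exp (- (norm (y - x))\<^sup>2 / (2 * s)) * exp (- f y / \<delta>)"
  by (simp add: W_def gauss_density_def cc_def)

lemma W_pos: "W x y > 0" using cc_pos by (simp add: W_eq)

lemma f_meas[measurable]: "f \<in> borel_measurable borel"
  using cont by (rule borel_measurable_continuous_onI)

lemma W_meas[measurable]: "(\<lambda>y. W x y) \<in> borel_measurable borel"
  unfolding W_eq by measurable

lemma integrable_bnd:
  fixes g :: "'a \<Rightarrow> 'b::{banach, second_countable_topology}"
  assumes "g \<in> borel_measurable borel" "\<And>y. norm (g y) \<le> K * exp (- f y / \<delta>)"
  shows "integrable lborel g"
proof (rule Bochner_Integration.integrable_bound[where f="\<lambda>y. K * exp (- f y / \<delta>)"])
  show "integrable lborel (\<lambda>y. K * exp (- f y / \<delta>))" using integ by simp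
  show "g \<in> borel_measurable lborel" using assms(1) by simp
  show "AE y in lborel. norm (g y) \<le> norm (K * exp (- f y / \<delta>))"
    using assms(2) by (auto intro: order_trans[OF _ abs_ge_self])
qed

lemma W_bound: "W x y \<le> cc * exp (- f y / \<delta>)"
proof -
  have "exp (- (norm (y - x))\<^sup>2 / (2 * s)) \<le> 1" using s_pos by (simp add: divide_nonpos_pos)
  then show ?thesis unfolding W_eq using cc_pos
    by (simp add: mult_right_mono mult_left_le)
qed

lemma W_lin: "norm (y - x) * W x y \<le> cc * (1 + 2 * s) * exp (- f y / \<delta>)"
proof -
  have "\<bar>norm (y - x)\<bar> * exp (- (norm (y - x))\<^sup>2 / (2 * s)) \<le> 1 + 2 * s"
    by (rule lin_exp_bound) (use s_pos in simp)
  then have "cc * (norm (y - x) * exp (- (norm (y - x))\<^sup>2 / (2 * s))) * exp (- f y / \<delta>)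
      \<le> cc * (1 + 2 * s) * exp (- f y / \<delta>)"
    using cc_pos by (intro mult_right_mono mult_left_mono) auto
  then show ?thesis unfolding W_eq by (simp add: algebra_simps)
qed

lemma W_sq: "(norm (y - x))\<^sup>2 * W x y \<le> cc * (2 * s) * exp (- f y / \<delta>)"
proof -
  have "(norm (y - x))\<^sup>2 * exp (- (norm (y - x))\<^sup>2 / (2 * s)) \<le> 2 * s"
    by (rule sq_exp_bound) (use s_pos in simp)
  then have "cc * ((norm (y - x))\<^sup>2 * exp (- (norm (y - x))\<^sup>2 / (2 * s))) * exp (- f y / \<delta>)
      \<le> cc * (2 * s) * exp (- f y / \<delta>)"
    using cc_pos by (intro mult_right_mono mult_left_mono) auto
  then show ?thesis unfolding W_eq by (simp add: algebra_simps)
qed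

lemma int_W: "integrable lborel (W x)"
  by (rule integrable_bnd[where K=cc]) (use W_pos W_bound in \<open>auto simp: less_imp_le\<close>)

lemma int_Wy: "integrable lborel (\<lambda>y. W x y *\<^sub>R y)"
proof (rule integrable_bnd[where K="cc * (1 + 2 * s) + cc * norm x"])
  show "(\<lambda>y. W x y *\<^sub>R y) \<in> borel_measurable borel" by measurable
  fix y
  have "norm (W x y *\<^sub>R y) = W x y * norm y" using W_pos[of x y] by simp
  also have "\<dots> \<le> W x y * (norm (y - x) + norm x)"
    using W_pos[of x y] norm_triangle_ineq[of "y - x" x] by (intro mult_left_mono) auto
  also have "\<dots> = norm (y - x) * W x y + norm x * W x y" by (simp add: algebra_simps)
  also have "\<dots> \<le> cc * (1 + 2 * s) * exp (- f y / \<delta>) + norm x * (cc * exp (- f y / \<delta>))"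
    using W_lin[of y x] W_bound[of x y] by (intro add_mono mult_left_mono) auto
  finally show "norm (W x y *\<^sub>R y) \<le> (cc * (1 + 2 * s) + cc * norm x) * exp (- f y / \<delta>)"
    by (simp add: algebra_simps)
qed

lemma int_Wsq: "integrable lborel (\<lambda>y. W x y * (norm (y - a))\<^sup>2)"
proof (rule integrable_bnd[where K="2 * (cc * (2 * s)) + 2 * (norm (x - a))\<^sup>2 * cc"])
  show "(\<lambda>y. W x y * (norm (y - a))\<^sup>2) \<in> borel_measurable borel" by measurable
  fix y
  have t: "norm (y - a) \<le> norm (y - x) + norm (x - a)" using norm_triangle_ineq[of "y - x" "x - a"] by simp
  have "(norm (y - a))\<^sup>2 \<le> (norm (y - x) + norm (x - a))\<^sup>2" using t by (intro power_mono) auto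
  also have "\<dots> \<le> 2 * (norm (y - x))\<^sup>2 + 2 * (norm (x - a))\<^sup>2"
  proof -
    have "0 \<le> (norm (y - x) - norm (x - a))\<^sup>2" by simp
    then show ?thesis unfolding power2_sum power2_diff by linarith
  qed
  finally have sq: "(norm (y - a))\<^sup>2 \<le> 2 * (norm (y - x))\<^sup>2 + 2 * (norm (x - a))\<^sup>2" .
  have "norm (W x y * (norm (y - a))\<^sup>2) = W x y * (norm (y - a))\<^sup>2" using W_pos[of x y] by simp
  also have "\<dots> \<le> W x y * (2 * (norm (y - x))\<^sup>2 + 2 * (norm (x - a))\<^sup>2)"
    using W_pos[of x y] sq by (intro mult_left_mono) auto
  also have "\<dots> = 2 * ((norm (y - x))\<^sup>2 * W x y) + 2 * (norm (x - a))\<^sup>2 * W x y" by (simp add: algebra_simps)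
  also have "\<dots> \<le> 2 * (cc * (2 * s) * exp (- f y / \<delta>)) + 2 * (norm (x - a))\<^sup>2 * (cc * exp (- f y / \<delta>))"
    using W_sq[of y x] W_bound[of x y] by (intro add_mono mult_left_mono) auto
  finally show "norm (W x y * (norm (y - a))\<^sup>2) \<le> (2 * (cc * (2 * s)) + 2 * (norm (x - a))\<^sup>2 * cc) * exp (- f y / \<delta>)"
    by (simp add: algebra_simps)
qed

lemma Z_pos: "Z x > 0"
proof -
  have nn: "AE y in lborel. 0 \<le> W x y" using W_pos by (simp add: less_imp_le)
  have "Z x \<ge> 0" unfolding Z_def using nn by (rule integral_nonneg_AE)
  moreover have "Z x \<noteq> 0"
  proof
    assume "Z x = 0"
    then have "AE y in lborel. W x y = 0"
      using integral_nonneg_eq_0_iff_AE[OF int_W nn] by (simp add: Z_def)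
    then obtain N where N: "{y \<in> space lborel. \<not> W x y = 0} \<subseteq> N" "emeasure lborel N = 0"
      by (rule AE_E)
    have "N = UNIV" using N(1) W_pos[of x] by (auto simp: less_le)
    then have "emeasure lborel (UNIV :: 'a set) = 0" using N(2) by simp
    then show False by simp
  qed
  ultimately show ?thesis by simp
qed

lemma W_fun: "W x = (\<lambda>y. gauss_density (lam * \<delta>) x y * exp (- f y / \<delta>))"
  by (rule ext) (simp add: W_def s_def)

lemma zprox_eq: "zprox \<delta> lam f x = M x /\<^sub>R Z x"
  by (simp add: zprox_def M_def Z_def W_fun)

lemma soft_eq: "soft_moreau lam \<delta> f x = - \<delta> * ln (Z x)"
  by (simp add: soft_moreau_def Z_def W_fun)

end


definition "Kb (s::real) = exp (2 / s) * (8 * s + 2) / s\<^sup>2 + 1 / (2 * s)"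

lemma gauss_taylor:
  fixes s r p nh :: real
  assumes s: "s > 0" and nh: "0 \<le> nh" "nh \<le> 1" and r: "0 \<le> r" and p: "\<bar>p\<bar> \<le> r * nh"
  shows "\<bar>exp (- (r\<^sup>2 - 2 * p + nh\<^sup>2) / (2 * s)) - exp (- r\<^sup>2 / (2 * s)) * (1 + p / s)\<bar> \<le> Kb s * nh\<^sup>2"
proof -
  define a where "a = (2 * p - nh\<^sup>2) / (2 * s)"
  define E where "E = exp (- r\<^sup>2 / (2 * s))"
  have E0: "0 < E" "E \<le> 1" using s by (auto simp: E_def divide_nonpos_pos)
  have ex: "exp (- (r\<^sup>2 - 2 * p + nh\<^sup>2) / (2 * s)) = E * exp a"
    unfolding E_def a_def by (simp add: exp_add[symmetric] add_divide_distrib[symmetric] diff_divide_distrib algebra_simps)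
  have pa: "p / s = a + nh\<^sup>2 / (2 * s)" using s unfolding a_def by (simp add: field_simps)
  have eq: "exp (- (r\<^sup>2 - 2 * p + nh\<^sup>2) / (2 * s)) - exp (- r\<^sup>2 / (2 * s)) * (1 + p / s)
      = E * (exp a - 1 - a) - E * (nh\<^sup>2 / (2 * s))"
    unfolding ex pa by (simp add: E_def algebra_simps)
  have nh2: "nh\<^sup>2 \<le> nh" using nh by (simp add: power2_eq_square mult_left_le)
  have "\<bar>2 * p - nh\<^sup>2\<bar> \<le> 2 * r * nh + nh" using p nh2 nh mult.assoc[of 2 r nh] zero_le_power2[of nh] unfolding abs_le_iff by linarith
  also have "\<dots> \<le> 2 * (r + 1) * nh" using nh by (simp add: algebra_simps)
  finally have "\<bar>2 * p - nh\<^sup>2\<bar> \<le> 2 * (r + 1) * nh" .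
  then have aa: "\<bar>a\<bar> \<le> (r + 1) * nh / s" using s unfolding a_def by (simp add: abs_div field_simps)
  have aa1: "\<bar>a\<bar> \<le> (r + 1) / s"
    using aa s nh r by (smt (verit) divide_right_mono mult_left_le)
  have a2: "a\<^sup>2 \<le> ((r + 1) * nh / s)\<^sup>2"
    using aa by (metis abs_ge_zero power2_abs power_mono)
  have rr: "(r + 1) / s \<le> r\<^sup>2 / (4 * s) + 2 / s"
  proof -
    have "0 \<le> (r / 2 - 1)\<^sup>2" by simp
    then have "r + 1 \<le> r\<^sup>2 / 4 + 2" unfolding power2_diff by (simp add: power_divide)
    then have "(r + 1) / s \<le> (r\<^sup>2 / 4 + 2) / s" using s by (simp add: divide_right_mono)
    then show ?thesis using s by (simp add: add_divide_distrib)
  qed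
  have Eexp: "E * exp \<bar>a\<bar> \<le> exp (2 / s) * exp (- r\<^sup>2 / (4 * s))"
  proof -
    have "E * exp \<bar>a\<bar> = exp (- r\<^sup>2 / (2 * s) + \<bar>a\<bar>)" unfolding E_def exp_add ..
    also have "\<dots> \<le> exp (2 / s + - r\<^sup>2 / (4 * s))"
    proof -
      have "- r\<^sup>2 / (2 * s) + r\<^sup>2 / (4 * s) = - r\<^sup>2 / (4 * s)" using s by (simp add: field_simps)
      then show ?thesis using aa1 rr by simp
    qed
    also have "\<dots> = exp (2 / s) * exp (- r\<^sup>2 / (4 * s))" unfolding exp_add ..
    finally show ?thesis .
  qed
  have poly: "(r + 1)\<^sup>2 * exp (- r\<^sup>2 / (4 * s)) \<le> 8 * s + 2"
  proof -
    have "(r + 1)\<^sup>2 \<le> 2 * r\<^sup>2 + 2"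
    proof -
      have "0 \<le> (r - 1)\<^sup>2" by simp
      then show ?thesis unfolding power2_sum power2_diff by simp
    qed
    then have "(r + 1)\<^sup>2 * exp (- r\<^sup>2 / (4 * s)) \<le> (2 * r\<^sup>2 + 2) * exp (- r\<^sup>2 / (4 * s))"
      by (simp add: mult_right_mono)
    also have "\<dots> = 2 * (r\<^sup>2 * exp (- r\<^sup>2 / (4 * s))) + 2 * exp (- r\<^sup>2 / (4 * s))"
      by (simp add: algebra_simps)
    also have "\<dots> \<le> 2 * (4 * s) + 2 * 1"
    proof -
      have "r\<^sup>2 * exp (- r\<^sup>2 / (4 * s)) \<le> 4 * s" by (rule sq_exp_bound) (use s in simp)
      moreover have "exp (- r\<^sup>2 / (4 * s)) \<le> 1" using s by (simp add: divide_nonpos_pos)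
      ultimately show ?thesis by linarith
    qed
    finally show ?thesis by simp
  qed
  have main: "E * (a\<^sup>2 * exp \<bar>a\<bar>) \<le> exp (2 / s) * (8 * s + 2) / s\<^sup>2 * nh\<^sup>2"
  proof -
    have "E * (a\<^sup>2 * exp \<bar>a\<bar>) = a\<^sup>2 * (E * exp \<bar>a\<bar>)" by simp
    also have "\<dots> \<le> ((r + 1) * nh / s)\<^sup>2 * (exp (2 / s) * exp (- r\<^sup>2 / (4 * s)))"
      using E0 by (intro mult_mono[OF a2 Eexp]) auto
    also have "\<dots> = exp (2 / s) * ((r + 1)\<^sup>2 * exp (- r\<^sup>2 / (4 * s))) * nh\<^sup>2 / s\<^sup>2"
      by (simp add: power_mult_distrib power_divide)
    also have "\<dots> \<le> exp (2 / s) * (8 * s + 2) * nh\<^sup>2 / s\<^sup>2"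
      using poly s by (intro divide_right_mono mult_right_mono mult_left_mono) auto
    finally show ?thesis by simp
  qed
  have "\<bar>E * (exp a - 1 - a) - E * (nh\<^sup>2 / (2 * s))\<bar> \<le> E * (exp a - 1 - a) + E * (nh\<^sup>2 / (2 * s))"
    using exp_quad_aux(1)[of a] E0 s by (intro abs_triangle_ineq4[THEN order_trans]) (simp add: abs_mult)
  also have "\<dots> \<le> E * (a\<^sup>2 * exp \<bar>a\<bar>) + 1 * (nh\<^sup>2 / (2 * s))"
    using exp_quad_aux(2)[of a] E0 s by (intro add_mono mult_left_mono mult_right_mono) auto
  also have "\<dots> \<le> exp (2 / s) * (8 * s + 2) / s\<^sup>2 * nh\<^sup>2 + nh\<^sup>2 / (2 * s)"
    using main by simp
  also have "\<dots> = Kb s * nh\<^sup>2" by (simp add: Kb_def algebra_simps)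
  finally show ?thesis unfolding eq .
qed



context zsetup begin

lemma norm_shift: "(norm (y - (x + h)))\<^sup>2 = (norm (y - x))\<^sup>2 - 2 * inner (y - x) h + (norm h)\<^sup>2"
proof -
  have "y - (x + h) = (y - x) - h" by simp
  then show ?thesis
    by (simp only: power2_norm_eq_inner inner_diff_left inner_diff_right inner_commute[of h "y - x"])
       (simp add: algebra_simps inner_commute)
qed

lemma W_taylor_pt:
  assumes h: "norm h \<le> 1"
  shows "\<bar>W (x + h) y - W x y - W x y * inner h (y - x) / s\<bar> \<le> cc * Kb s * (norm h)\<^sup>2 * exp (- f y / \<delta>)"
proof -
  define r where "r = norm (y - x)"
  define p where "p = inner (y - x) h"
  define e where "e = exp (- f y / \<delta>)"
  have p: "\<bar>p\<bar> \<le> r * norm h" unfolding p_def r_def by (rule Cauchy_Schwarz_ineq2)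
  have T: "\<bar>exp (- (r\<^sup>2 - 2 * p + (norm h)\<^sup>2) / (2 * s)) - exp (- r\<^sup>2 / (2 * s)) * (1 + p / s)\<bar> \<le> Kb s * (norm h)\<^sup>2"
    by (rule gauss_taylor[OF s_pos _ h _ p]) (auto simp: r_def)
  have ip: "inner h (y - x) = p" by (simp add: p_def inner_commute)
  have eq: "W (x + h) y - W x y - W x y * inner h (y - x) / s
      = (cc * e) * (exp (- (r\<^sup>2 - 2 * p + (norm h)\<^sup>2) / (2 * s)) - exp (- r\<^sup>2 / (2 * s)) * (1 + p / s))"
    unfolding W_eq norm_shift r_def[symmetric] p_def[symmetric] e_def[symmetric] ip
    by (simp add: algebra_simps)
  have ce: "0 < cc * e" using cc_pos by (simp add: e_def)
  have "\<bar>W (x + h) y - W x y - W x y * inner h (y - x) / s\<bar>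
      = (cc * e) * \<bar>exp (- (r\<^sup>2 - 2 * p + (norm h)\<^sup>2) / (2 * s)) - exp (- r\<^sup>2 / (2 * s)) * (1 + p / s)\<bar>"
    unfolding eq using cc_pos by (simp add: abs_mult e_def)
  also have "\<dots> \<le> (cc * e) * (Kb s * (norm h)\<^sup>2)" using ce T by (intro mult_left_mono) auto
  finally show ?thesis by (simp add: e_def algebra_simps)
qed

definition "Ig = integral\<^sup>L lborel (\<lambda>y. exp (- f y / \<delta>))"

definition "grad x = (M x - Z x *\<^sub>R x) /\<^sub>R s"

lemma lin_integral:
  shows "integrable lborel (\<lambda>y. W x y * inner h (y - x) / s)"
    and "integral\<^sup>L lborel (\<lambda>y. W x y * inner h (y - x) / s) = inner h (grad x)"
proof -
  have eqf: "(\<lambda>y. W x y * inner h (y - x) / s) = (\<lambda>y. (inner h (W x y *\<^sub>R y) - inner h x * W x y) / s)"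
    by (rule ext) (simp add: inner_diff_right algebra_simps)
  have i1: "integrable lborel (\<lambda>y. inner h (W x y *\<^sub>R y))"
    by (rule integrable_inner_right) (rule int_Wy)
  have i2: "integrable lborel (\<lambda>y. inner h x * W x y)"
    by (rule integrable_mult_right) (rule int_W)
  show "integrable lborel (\<lambda>y. W x y * inner h (y - x) / s)"
    unfolding eqf by (rule integrable_divide_zero) (rule Bochner_Integration.integrable_diff[OF i1 i2])
  have j1: "integral\<^sup>L lborel (\<lambda>y. inner h (W x y *\<^sub>R y)) = inner h (M x)"
    unfolding M_def by (rule integral_inner_right) (rule int_Wy)
  have j2: "integral\<^sup>L lborel (\<lambda>y. inner h x * W x y) = inner h x * Z x"
    unfolding Z_def using int_W[of x] by simp
  have "integral\<^sup>L lborel (\<lambda>y. (inner h (W x y *\<^sub>R y) - inner h x * W x y) / s)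
      = (inner h (M x) - inner h x * Z x) / s"
    unfolding integral_divide_zero Bochner_Integration.integral_diff[OF i1 i2] j1 j2 ..
  also have "\<dots> = inner h (grad x)"
    by (simp add: grad_def inner_diff_right algebra_simps divide_inverse)
  finally show "integral\<^sup>L lborel (\<lambda>y. W x y * inner h (y - x) / s) = inner h (grad x)"
    unfolding eqf .
qed

lemma Z_taylor:
  assumes h: "norm h \<le> 1"
  shows "\<bar>Z (x + h) - Z x - inner h (grad x)\<bar> \<le> cc * Kb s * Ig * (norm h)\<^sup>2"
proof -
  define g where "g y = W (x + h) y - W x y - W x y * inner h (y - x) / s" for y
  have ig: "integrable lborel g" unfolding g_def
    using int_W[of "x + h"] int_W[of x] lin_integral(1)[of x h] by simp
  have "Z (x + h) - Z x - inner h (grad x) = integral\<^sup>L lborel g"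
    unfolding g_def Z_def lin_integral(2)[of x h, symmetric]
    using int_W[of "x + h"] int_W[of x] lin_integral(1)[of x h] by simp
  also have "\<bar>\<dots>\<bar> \<le> integral\<^sup>L lborel (\<lambda>y. cc * Kb s * (norm h)\<^sup>2 * exp (- f y / \<delta>))"
  proof (rule integral_abs_bound_integral)
    show "integrable lborel g" by (rule ig)
    show "integrable lborel (\<lambda>y. cc * Kb s * (norm h)\<^sup>2 * exp (- f y / \<delta>))"
      using integ by simp
    fix y show "\<bar>g y\<bar> \<le> cc * Kb s * (norm h)\<^sup>2 * exp (- f y / \<delta>)"
      unfolding g_def by (rule W_taylor_pt[OF h])
  qed
  also have "\<dots> = cc * Kb s * Ig * (norm h)\<^sup>2" using integ by (simp add: Ig_def)
  finally show ?thesis .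
qed

lemma Kb_nonneg: "Kb s \<ge> 0"
  using s_pos by (simp add: Kb_def)

lemma Ig_nonneg: "Ig \<ge> 0"
  unfolding Ig_def by (rule integral_nonneg_AE) simp

lemma Z_deriv: "(Z has_derivative (\<lambda>h. inner h (grad x))) (at x)"
proof -
  define K where "K = cc * Kb s * Ig"
  have K0: "K \<ge> 0" unfolding K_def using cc_pos Kb_nonneg Ig_nonneg by simp
  show ?thesis unfolding has_derivative_at_alt
  proof (intro conjI allI impI)
    show "bounded_linear (\<lambda>h. inner h (grad x))" by (rule bounded_linear_inner_left)
    fix e :: real assume e: "e > 0"
    define d where "d = min 1 (e / (K + 1))"
    have d: "d > 0" using e K0 by (simp add: d_def)
    show "\<exists>d>0. \<forall>y. norm (y - x) < d \<longrightarrow> norm (Z y - Z x - inner (y - x) (grad x)) \<le> e * norm (y - x)"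
    proof (intro exI[of _ d] conjI allI impI d)
      fix y assume y: "norm (y - x) < d"
      define h where "h = y - x"
      have h1: "norm h \<le> 1" using y by (simp add: h_def d_def)
      have hK: "K * norm h \<le> e"
      proof -
        have "norm h \<le> e / (K + 1)" using y by (simp add: h_def d_def)
        then have "K * norm h \<le> K * (e / (K + 1))" using K0 by (intro mult_left_mono) auto
        also have "\<dots> \<le> e" using K0 e by (simp add: field_simps)
        finally show ?thesis .
      qed
      have "\<bar>Z (x + h) - Z x - inner h (grad x)\<bar> \<le> K * (norm h)\<^sup>2"
        using Z_taylor[OF h1] by (simp add: K_def)
      also have "\<dots> = (K * norm h) * norm h" by (simp add: power2_eq_square)
      also have "\<dots> \<le> e * norm h" using hK by (intro mult_right_mono) auto
      finally show "norm (Z y - Z x - inner (y - x) (grad x)) \<le> e * norm (y - x)"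
        by (simp add: h_def)
    qed
  qed
qed

lemma soft_grad: "GDERIV (soft_moreau lam \<delta> f) x :> (x - zprox \<delta> lam f x) /\<^sub>R lam"
proof -
  have sf: "soft_moreau lam \<delta> f = (\<lambda>x. - \<delta> * ln (Z x))" by (rule ext) (simp add: soft_eq)
  have G: "GDERIV Z x :> grad x" unfolding gderiv_def by (rule Z_deriv)
  have D: "DERIV (\<lambda>t. - \<delta> * ln t) (Z x) :> - \<delta> * inverse (Z x)"
    using Z_pos[of x] by (auto intro!: derivative_eq_intros simp: divide_inverse)
  have "GDERIV (\<lambda>x. - \<delta> * ln (Z x)) x :> (- \<delta> * inverse (Z x)) *\<^sub>R grad x"
    by (rule GDERIV_DERIV_compose[OF G D])
  moreover have "(- \<delta> * inverse (Z x)) *\<^sub>R grad x = (x - zprox \<delta> lam f x) /\<^sub>R lam"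
  proof -
    have Zx: "Z x \<noteq> 0" using Z_pos[of x] by simp
    have "(- \<delta> * inverse (Z x)) *\<^sub>R grad x = (- \<delta> * inverse (Z x) / s) *\<^sub>R (M x - Z x *\<^sub>R x)"
      by (simp add: grad_def divide_inverse mult.commute)
    also have "\<dots> = (- inverse (Z x * lam)) *\<^sub>R M x + inverse lam *\<^sub>R x"
      using del lam Zx by (simp add: s_def scaleR_diff_right field_simps)
    also have "\<dots> = (x - zprox \<delta> lam f x) /\<^sub>R lam"
      using lam Zx by (simp add: zprox_eq scaleR_diff_right field_simps)
    finally show ?thesis .
  qed
  ultimately show ?thesis unfolding sf by simp
qed

end


lemma norm_add_scale:
  fixes a u :: "'a::real_inner"
  shows "(norm (a + c *\<^sub>R u))\<^sup>2 = (norm a)\<^sup>2 + 2 * c * inner a u + c\<^sup>2 * (norm u)\<^sup>2"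
  by (simp only: power2_norm_eq_inner inner_add_left inner_add_right inner_scaleR_left inner_scaleR_right)
     (simp add: inner_commute[of u a] power2_eq_square algebra_simps)

context zsetup begin

definition "Dd y0 y = (f y - f y0) / \<delta>"
definition "Pp t y0 x y = (2 * inner (y0 - x) (y - y0) + (1 + t) * (norm (y - y0))\<^sup>2) / (2 * s)"

lemma W_H: "W x y = cc * exp (- (f y / \<delta> + (norm (y - x))\<^sup>2 / (2 * s)))"
  unfolding W_eq by (simp add: mult.assoc exp_add[symmetric] algebra_simps)

lemma pt_ineq:
  assumes t: "0 \<le> t" "t \<le> 1"
  shows "W x y * (1 + (1 - t) * (Dd y0 y + Pp t y0 x y)) \<le> W x ((1 - t) *\<^sub>R y0 + t *\<^sub>R y)"
proof -
  define a where "a = y0 - x"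
  define u where "u = y - y0"
  define v where "v = (1 - t) *\<^sub>R y0 + t *\<^sub>R y"
  have vx: "v - x = a + t *\<^sub>R u" by (simp add: v_def a_def u_def algebra_simps)
  have yx: "y - x = a + 1 *\<^sub>R u" by (simp add: a_def u_def)
  have nv: "(norm (v - x))\<^sup>2 = (norm a)\<^sup>2 + 2 * t * inner a u + t\<^sup>2 * (norm u)\<^sup>2"
    unfolding vx by (rule norm_add_scale)
  have ny: "(norm (y - x))\<^sup>2 = (norm a)\<^sup>2 + 2 * inner a u + (norm u)\<^sup>2"
    unfolding yx norm_add_scale by simp
  have fc: "f v \<le> (1 - t) * f y0 + t * f y"
    unfolding v_def using t by (intro convex_onD[OF cvx]) auto
  define Hy where "Hy = f y / \<delta> + (norm (y - x))\<^sup>2 / (2 * s)"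
  define Hv where "Hv = f v / \<delta> + (norm (v - x))\<^sup>2 / (2 * s)"
  define B where "B = ((1 - t) * f y0 + t * f y) / \<delta> + (norm (v - x))\<^sup>2 / (2 * s)"
  have HvB: "Hv \<le> B" unfolding Hv_def B_def using fc del by (simp add: divide_right_mono)
  have diff: "Hy - B = (1 - t) * (Dd y0 y + Pp t y0 x y)"
  proof -
    have "Hy - B = (1 - t) * (f y - f y0) / \<delta> + ((norm (y - x))\<^sup>2 - (norm (v - x))\<^sup>2) / (2 * s)"
      unfolding Hy_def B_def using del s_pos by (simp add: field_simps)
    also have "(norm (y - x))\<^sup>2 - (norm (v - x))\<^sup>2 = (1 - t) * (2 * inner a u + (1 + t) * (norm u)\<^sup>2)"
      unfolding nv ny by (simp add: power2_eq_square algebra_simps)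
    finally show ?thesis
      unfolding Dd_def Pp_def a_def[symmetric] u_def[symmetric]
      using s_pos del by (simp add: field_simps)
  qed
  have "W x y * (1 + (Hy - B)) = cc * (exp (- Hy) * (1 + (Hy - B)))"
    unfolding W_H Hy_def by simp
  also have "\<dots> \<le> cc * (exp (- Hy) * exp (Hy - B))"
    using cc_pos exp_ge_add_one_self[of "Hy - B"] by (intro mult_left_mono) auto
  also have "\<dots> = cc * exp (- B)" by (simp add: exp_add[symmetric])
  also have "\<dots> \<le> cc * exp (- Hv)" using HvB cc_pos by (intro mult_left_mono) auto
  also have "\<dots> = W x v" unfolding W_H Hv_def ..
  finally show ?thesis unfolding diff v_def .
qed

lemma scale_int:
  assumes t: "t > 0"
  shows "integrable lborel (\<lambda>y. W x ((1 - t) *\<^sub>R y0 + t *\<^sub>R y))"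
    and "integral\<^sup>L lborel (\<lambda>y. W x ((1 - t) *\<^sub>R y0 + t *\<^sub>R y)) = Z x / t ^ DIM('a)"
proof -
  have t0: "t \<noteq> 0" using t by simp
  show "integrable lborel (\<lambda>y. W x ((1 - t) *\<^sub>R y0 + t *\<^sub>R y))"
    using lborel_integrable_affine_eu[OF int_W t0, of x "(1 - t) *\<^sub>R y0"] .
  have "Z x = \<bar>t\<bar> ^ DIM('a) * integral\<^sup>L lborel (\<lambda>y. W x ((1 - t) *\<^sub>R y0 + t *\<^sub>R y))"
    unfolding Z_def by (rule lborel_integral_affine_eu[OF int_W t0])
  then show "integral\<^sup>L lborel (\<lambda>y. W x ((1 - t) *\<^sub>R y0 + t *\<^sub>R y)) = Z x / t ^ DIM('a)"
    using t by (simp add: field_simps)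
qed

lemma int_WP:
  shows "integrable lborel (\<lambda>y. W x y * Pp t y0 x y)"
    and "integral\<^sup>L lborel (\<lambda>y. W x y * Pp t y0 x y)
       = (2 * (inner (y0 - x) (M x) - Z x * inner (y0 - x) y0)
          + (1 + t) * integral\<^sup>L lborel (\<lambda>y. W x y * (norm (y - y0))\<^sup>2)) / (2 * s)"
proof -
  define c where "c = y0 - x"
  have eqf: "(\<lambda>y. W x y * Pp t y0 x y) = (\<lambda>y. (2 * (inner c (W x y *\<^sub>R y) - inner c y0 * W x y)
         + (1 + t) * (W x y * (norm (y - y0))\<^sup>2)) / (2 * s))"
    by (rule ext) (simp add: Pp_def c_def inner_diff_right algebra_simps add_divide_distrib)
  have i1: "integrable lborel (\<lambda>y. inner c (W x y *\<^sub>R y))"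
    by (rule integrable_inner_right) (rule int_Wy)
  have i2: "integrable lborel (\<lambda>y. inner c y0 * W x y)"
    by (rule integrable_mult_right) (rule int_W)
  have i3: "integrable lborel (\<lambda>y. (1 + t) * (W x y * (norm (y - y0))\<^sup>2))"
    by (rule integrable_mult_right) (rule int_Wsq)
  have i12: "integrable lborel (\<lambda>y. 2 * (inner c (W x y *\<^sub>R y) - inner c y0 * W x y))"
    by (rule integrable_mult_right) (rule Bochner_Integration.integrable_diff[OF i1 i2])
  show "integrable lborel (\<lambda>y. W x y * Pp t y0 x y)"
    unfolding eqf by (rule integrable_divide_zero) (rule Bochner_Integration.integrable_add[OF i12 i3])
  have j1: "integral\<^sup>L lborel (\<lambda>y. inner c (W x y *\<^sub>R y)) = inner c (M x)"
    unfolding M_def by (rule integral_inner_right) (rule int_Wy)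
  have j2: "integral\<^sup>L lborel (\<lambda>y. inner c y0 * W x y) = inner c y0 * Z x"
    unfolding Z_def using int_W[of x] by simp
  have j3: "integral\<^sup>L lborel (\<lambda>y. (1 + t) * (W x y * (norm (y - y0))\<^sup>2))
      = (1 + t) * integral\<^sup>L lborel (\<lambda>y. W x y * (norm (y - y0))\<^sup>2)"
    using int_Wsq[of x y0] by simp
  have j12: "integral\<^sup>L lborel (\<lambda>y. 2 * (inner c (W x y *\<^sub>R y) - inner c y0 * W x y))
      = 2 * (inner c (M x) - inner c y0 * Z x)"
    unfolding integral_mult_right_zero Bochner_Integration.integral_diff[OF i1 i2] j1 j2
    by (simp add: Z_def)
  show "integral\<^sup>L lborel (\<lambda>y. W x y * Pp t y0 x y)
       = (2 * (inner (y0 - x) (M x) - Z x * inner (y0 - x) y0)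
          + (1 + t) * integral\<^sup>L lborel (\<lambda>y. W x y * (norm (y - y0))\<^sup>2)) / (2 * s)"
    unfolding eqf integral_divide_zero Bochner_Integration.integral_add[OF i12 i3] j12 j3
    by (simp add: c_def mult.commute)
qed

end


lemma affine_minorant:
  fixes f :: "'a::euclidean_space \<Rightarrow> real"
  assumes cvx: "convex_on UNIV f" and cont: "continuous_on UNIV f" and e: "\<epsilon> > 0"
  shows "\<exists>g b. (\<forall>y. inner g y + b \<le> f y) \<and> f z - \<epsilon> \<le> inner g z + b"
proof -
  define S where "S = epigraph UNIV f"
  have cS: "convex S" unfolding S_def by (rule convex_epigraphI[OF cvx])
  have Seq: "S = {p. f (fst p) \<le> snd p}" by (auto simp: S_def epigraph_def)
  have clS: "closed S" unfolding Seq
    by (intro closed_Collect_le continuous_on_compose2[OF cont continuous_on_fst] continuous_on_snd) auto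
  have nS: "(z, f z - \<epsilon>) \<notin> S" using e by (simp add: Seq)
  obtain a b where ab: "inner a (z, f z - \<epsilon>) < b" "\<forall>p\<in>S. inner a p > b"
    using separating_hyperplane_closed_point[OF cS clS nS] by blast
  obtain a1 a2 where a: "a = (a1, a2)" by (cases a)
  have ab1: "inner a1 z + a2 * (f z - \<epsilon>) < b" using ab(1) by (simp add: a)
  have ab2: "inner a1 y + a2 * t > b" if "f y \<le> t" for y t
    using ab(2) that by (auto simp: a Seq)
  have "inner a1 z + a2 * f z > b" using ab2[of z "f z"] by simp
  with ab1 have "a2 * \<epsilon> > 0" by (simp add: algebra_simps)
  then have a2: "a2 > 0" using e by (simp add: zero_less_mult_iff)
  define g where "g = (- 1 / a2) *\<^sub>R a1"
  define b' where "b' = b / a2"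
  have gy: "inner g y + b' = (b - inner a1 y) / a2" for y
    using a2 by (simp add: g_def b'_def field_simps)
  show ?thesis
  proof (intro exI conjI allI)
    fix y
    have "b - inner a1 y < a2 * f y" using ab2[of y "f y"] by simp
    then show "inner g y + b' \<le> f y" unfolding gy using a2 by (simp add: divide_le_eq mult.commute less_imp_le)
  next
    have "a2 * (f z - \<epsilon>) < b - inner a1 z" using ab1 by simp
    then show "f z - \<epsilon> \<le> inner g z + b'" unfolding gy using a2
      by (simp add: le_divide_eq mult.commute less_imp_le)
  qed
qed

context zsetup begin

lemma int_Wf: "integrable lborel (\<lambda>y. W x y * f y)"
proof -
  obtain x0 where x0: "\<And>y. f x0 \<le> f y" using minex by blast
  define t :: real where "t = 1 / 2"
  define R where "R y = 2 * W x ((1 - t) *\<^sub>R x0 + t *\<^sub>R y) - 2 * W x y - W x y * Pp t x0 x y" for y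
  have iR: "integrable lborel R" unfolding R_def
    using scale_int(1)[of t x x0] int_W[of x] int_WP(1)[of x t x0] by (simp add: t_def)
  have pt: "W x y * Dd x0 y \<le> R y" for y
  proof -
    have "W x y * (1 + (1 - t) * (Dd x0 y + Pp t x0 x y)) \<le> W x ((1 - t) *\<^sub>R x0 + t *\<^sub>R y)"
      by (rule pt_ineq) (auto simp: t_def)
    then show ?thesis unfolding R_def t_def by (simp add: algebra_simps)
  qed
  have nn: "0 \<le> W x y * Dd x0 y" for y
    using W_pos[of x y] x0[of y] del by (simp add: Dd_def)
  have iD: "integrable lborel (\<lambda>y. W x y * Dd x0 y)"
  proof (rule Bochner_Integration.integrable_bound[OF iR])
    show "(\<lambda>y. W x y * Dd x0 y) \<in> borel_measurable lborel" unfolding Dd_def by measurable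
    show "AE y in lborel. norm (W x y * Dd x0 y) \<le> norm (R y)"
      using pt nn by (auto intro!: AE_I2 order_trans[OF _ abs_ge_self])
  qed
  have eq: "(\<lambda>y. W x y * f y) = (\<lambda>y. \<delta> * (W x y * Dd x0 y) + f x0 * W x y)"
    by (rule ext) (use del in \<open>simp add: Dd_def field_simps\<close>)
  show ?thesis unfolding eq using iD int_W[of x] by simp
qed

lemma jensen_W: "integral\<^sup>L lborel (\<lambda>y. W x y * f y) \<ge> Z x * f (zprox \<delta> lam f x)"
proof -
  define z where "z = zprox \<delta> lam f x"
  have Mz: "M x = Z x *\<^sub>R z" using Z_pos[of x] by (simp add: z_def zprox_eq)
  show ?thesis unfolding z_def[symmetric]
  proof (rule field_le_epsilon)
    fix e :: real assume e: "e > 0"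
    define \<epsilon> where "\<epsilon> = e / Z x"
    have eps: "\<epsilon> > 0" using e Z_pos[of x] by (simp add: \<epsilon>_def)
    obtain g b where gb: "\<And>y. inner g y + b \<le> f y" "f z - \<epsilon> \<le> inner g z + b"
      using affine_minorant[OF cvx cont eps, of z] by blast
    have i1: "integrable lborel (\<lambda>y. inner g (W x y *\<^sub>R y))"
      by (rule integrable_inner_right) (rule int_Wy)
    have i2: "integrable lborel (\<lambda>y. b * W x y)"
      by (rule integrable_mult_right) (rule int_W)
    have "integral\<^sup>L lborel (\<lambda>y. inner g (W x y *\<^sub>R y) + b * W x y) = inner g (M x) + b * Z x"
    proof -
      have j1: "integral\<^sup>L lborel (\<lambda>y. inner g (W x y *\<^sub>R y)) = inner g (M x)"
        unfolding M_def by (rule integral_inner_right) (rule int_Wy)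
      have j2: "integral\<^sup>L lborel (\<lambda>y. b * W x y) = b * Z x"
        unfolding Z_def using int_W[of x] by simp
      show ?thesis unfolding Bochner_Integration.integral_add[OF i1 i2] j1 j2 ..
    qed
    also have "\<dots> = Z x * (inner g z + b)" by (simp add: Mz algebra_simps)
    finally have I: "integral\<^sup>L lborel (\<lambda>y. inner g (W x y *\<^sub>R y) + b * W x y) = Z x * (inner g z + b)" .
    have "integral\<^sup>L lborel (\<lambda>y. inner g (W x y *\<^sub>R y) + b * W x y) \<le> integral\<^sup>L lborel (\<lambda>y. W x y * f y)"
    proof (rule integral_mono)
      show "integrable lborel (\<lambda>y. inner g (W x y *\<^sub>R y) + b * W x y)"
        by (rule Bochner_Integration.integrable_add[OF i1 i2])
      show "integrable lborel (\<lambda>y. W x y * f y)" by (rule int_Wf)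
      fix y
      have "W x y * (inner g y + b) \<le> W x y * f y"
        using W_pos[of x y] gb(1)[of y] by (intro mult_left_mono) auto
      then show "inner g (W x y *\<^sub>R y) + b * W x y \<le> W x y * f y" by (simp add: algebra_simps)
    qed
    then have "Z x * (inner g z + b) \<le> integral\<^sup>L lborel (\<lambda>y. W x y * f y)" using I by simp
    moreover have "Z x * (f z - \<epsilon>) \<le> Z x * (inner g z + b)"
      using Z_pos[of x] gb(2) by (intro mult_left_mono) auto
    moreover have "Z x * \<epsilon> = e" using Z_pos[of x] by (simp add: \<epsilon>_def)
    ultimately show "Z x * f z \<le> integral\<^sup>L lborel (\<lambda>y. W x y * f y) + e"
      by (simp add: algebra_simps)
  qed
qed

end


context zsetup begin

lemma inv_pow_lim:
  "((\<lambda>t::real. - ((inverse (t ^ n) - inverse (1 ^ n)) / (t - 1))) \<longlongrightarrow> real n) (at_left 1)"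
proof -
  have D: "((\<lambda>t::real. inverse (t ^ n)) has_field_derivative - real n) (at 1)"
    by (auto intro!: derivative_eq_intros)
  then have "((\<lambda>t::real. (inverse (t ^ n) - inverse (1 ^ n)) / (t - 1)) \<longlongrightarrow> - real n) (at 1)"
    unfolding has_field_derivative_iff .
  then have "((\<lambda>t::real. (inverse (t ^ n) - inverse (1 ^ n)) / (t - 1)) \<longlongrightarrow> - real n) (at_left 1)"
    by (rule tendsto_mono[OF at_le[OF subset_UNIV]])
  then show ?thesis using tendsto_minus by fastforce
qed

lemma key:
  "f y0 \<ge> f (zprox \<delta> lam f x) + inner ((x - zprox \<delta> lam f x) /\<^sub>R lam) (y0 - zprox \<delta> lam f x)
          - real DIM('a) * \<delta>"
proof -
  define z where "z = zprox \<delta> lam f x"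
  define Zx where "Zx = Z x"
  define d where "d = real DIM('a)"
  have Zp: "Zx > 0" using Z_pos[of x] by (simp add: Zx_def)
  have Mz: "M x = Zx *\<^sub>R z" using Zp by (simp add: z_def zprox_eq Zx_def)
  define A where "A = integral\<^sup>L lborel (\<lambda>y. W x y * Dd y0 y)"
  define Q where "Q = integral\<^sup>L lborel (\<lambda>y. W x y * (norm (y - y0))\<^sup>2)"
  define A1 where "A1 = inner (y0 - x) (M x) - Zx * inner (y0 - x) y0"
  define L where "L = A + (A1 + Q) / s"
  have iD: "integrable lborel (\<lambda>y. W x y * Dd y0 y)"
  proof -
    have eq: "(\<lambda>y. W x y * Dd y0 y) = (\<lambda>y. (W x y * f y - f y0 * W x y) / \<delta>)"
      by (rule ext) (simp add: Dd_def algebra_simps diff_divide_distrib)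
    show ?thesis unfolding eq using int_Wf[of x] int_W[of x] by simp
  qed
  have AWf: "A = (integral\<^sup>L lborel (\<lambda>y. W x y * f y) - f y0 * Zx) / \<delta>"
  proof -
    have eq: "(\<lambda>y. W x y * Dd y0 y) = (\<lambda>y. (W x y * f y - f y0 * W x y) / \<delta>)"
      by (rule ext) (simp add: Dd_def algebra_simps diff_divide_distrib)
    show ?thesis unfolding A_def eq using int_Wf[of x] int_W[of x] by (simp add: Zx_def Z_def)
  qed
  have Q0: "Q \<ge> 0" unfolding Q_def using W_pos[of x]
    by (intro integral_nonneg_AE AE_I2) (simp add: less_imp_le)
  have bound: "L \<le> Zx * (- ((inverse (t ^ DIM('a)) - inverse (1 ^ DIM('a))) / (t - 1))) + (1 - t) * Q / (2 * s)"
    if t: "0 < t" "t < 1" for t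
  proof -
    have i1: "integrable lborel (\<lambda>y. W x y * (1 + (1 - t) * (Dd y0 y + Pp t y0 x y)))"
    proof -
      have eq: "(\<lambda>y. W x y * (1 + (1 - t) * (Dd y0 y + Pp t y0 x y)))
          = (\<lambda>y. W x y + (1 - t) * (W x y * Dd y0 y) + (1 - t) * (W x y * Pp t y0 x y))"
        by (rule ext) (simp add: algebra_simps)
      show ?thesis unfolding eq using int_W[of x] iD int_WP(1)[of x t y0] by simp
    qed
    have "integral\<^sup>L lborel (\<lambda>y. W x y * (1 + (1 - t) * (Dd y0 y + Pp t y0 x y)))
        \<le> integral\<^sup>L lborel (\<lambda>y. W x ((1 - t) *\<^sub>R y0 + t *\<^sub>R y))"
      using i1 scale_int(1)[of t x y0] t pt_ineq[of t x _ y0]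
      by (intro integral_mono) auto
    also have "\<dots> = Zx / t ^ DIM('a)" using scale_int(2)[of t x y0] t by (simp add: Zx_def)
    finally have le: "integral\<^sup>L lborel (\<lambda>y. W x y * (1 + (1 - t) * (Dd y0 y + Pp t y0 x y))) \<le> Zx / t ^ DIM('a)" .
    have "integral\<^sup>L lborel (\<lambda>y. W x y * (1 + (1 - t) * (Dd y0 y + Pp t y0 x y)))
        = Zx + (1 - t) * A + (1 - t) * ((2 * A1 + (1 + t) * Q) / (2 * s))"
    proof -
      have eq: "(\<lambda>y. W x y * (1 + (1 - t) * (Dd y0 y + Pp t y0 x y)))
          = (\<lambda>y. W x y + (1 - t) * (W x y * Dd y0 y) + (1 - t) * (W x y * Pp t y0 x y))"
        by (rule ext) (simp add: algebra_simps)
      have a: "integrable lborel (\<lambda>y. W x y + (1 - t) * (W x y * Dd y0 y))"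
        using int_W[of x] iD by simp
      have b: "integrable lborel (\<lambda>y. (1 - t) * (W x y * Pp t y0 x y))"
        using int_WP(1)[of x t y0] by simp
      have "integral\<^sup>L lborel (\<lambda>y. W x y + (1 - t) * (W x y * Dd y0 y) + (1 - t) * (W x y * Pp t y0 x y))
          = integral\<^sup>L lborel (\<lambda>y. W x y + (1 - t) * (W x y * Dd y0 y))
            + integral\<^sup>L lborel (\<lambda>y. (1 - t) * (W x y * Pp t y0 x y))"
        by (rule Bochner_Integration.integral_add[OF a b])
      also have "integral\<^sup>L lborel (\<lambda>y. W x y + (1 - t) * (W x y * Dd y0 y)) = Zx + (1 - t) * A"
        using int_W[of x] iD by (simp add: Zx_def Z_def A_def)
      also have "integral\<^sup>L lborel (\<lambda>y. (1 - t) * (W x y * Pp t y0 x y))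
          = (1 - t) * ((2 * A1 + (1 + t) * Q) / (2 * s))"
        unfolding integral_mult_right_zero int_WP(2) by (simp add: A1_def Q_def Zx_def mult.commute)
      finally show ?thesis unfolding eq by simp
    qed
    with le have le2: "(1 - t) * (A + (2 * A1 + (1 + t) * Q) / (2 * s)) \<le> Zx / t ^ DIM('a) - Zx"
      by (simp add: algebra_simps)
    have split: "A + (2 * A1 + (1 + t) * Q) / (2 * s) = L - (1 - t) * Q / (2 * s)"
      unfolding L_def using s_pos by (simp add: field_simps)
    have "L - (1 - t) * Q / (2 * s) \<le> (Zx / t ^ DIM('a) - Zx) / (1 - t)"
      using le2 t unfolding split by (simp add: pos_le_divide_eq mult.commute)
    also have "(Zx / t ^ DIM('a) - Zx) / (1 - t)
        = Zx * (- ((inverse (t ^ DIM('a)) - inverse (1 ^ DIM('a))) / (t - 1)))"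
    proof -
      have "- ((inverse (t ^ DIM('a)) - inverse (1 ^ DIM('a))) / (t - 1)) = (inverse (t ^ DIM('a)) - 1) / (1 - t)"
        by (simp add: minus_divide_right)
      moreover have "(Zx / t ^ DIM('a) - Zx) / (1 - t) = Zx * ((inverse (t ^ DIM('a)) - 1) / (1 - t))"
        by (simp add: divide_inverse algebra_simps)
      ultimately show ?thesis by simp
    qed
    finally show ?thesis by simp
  qed
  have lim: "((\<lambda>t. Zx * (- ((inverse (t ^ DIM('a)) - inverse (1 ^ DIM('a))) / (t - 1))) + (1 - t) * Q / (2 * s))
      \<longlongrightarrow> Zx * d + (1 - 1) * Q / (2 * s)) (at_left 1)"
    unfolding d_def by (intro tendsto_intros inv_pow_lim) (use s_pos in auto)
  have Ld: "L \<le> Zx * d"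
  proof -
    have "L \<le> Zx * d + (1 - 1) * Q / (2 * s)"
    proof (rule tendsto_le[OF trivial_limit_at_left_real lim tendsto_const])
      show "\<forall>\<^sub>F t in at_left 1. L \<le> Zx * (- ((inverse (t ^ DIM('a)) - inverse (1 ^ DIM('a))) / (t - 1))) + (1 - t) * Q / (2 * s)"
      proof -
        have ev: "eventually (\<lambda>t. t \<in> {0<..<1}) (at_left (1::real))"
          by (rule eventually_at_left_real) simp
        then show ?thesis by eventually_elim (use bound in auto)
      qed
    qed
    then show ?thesis by simp
  qed
  have Qz: "Q \<ge> Zx * (norm (z - y0))\<^sup>2"
  proof -
    define w where "w = z - y0"
    have i1: "integrable lborel (\<lambda>y. 2 * inner w (W x y *\<^sub>R y))"
      by (intro integrable_mult_right integrable_inner_right int_Wy)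
    have i2: "integrable lborel (\<lambda>y. ((norm w)\<^sup>2 - 2 * inner w z) * W x y)"
      by (rule integrable_mult_right) (rule int_W)
    have "integral\<^sup>L lborel (\<lambda>y. 2 * inner w (W x y *\<^sub>R y) + ((norm w)\<^sup>2 - 2 * inner w z) * W x y)
        = 2 * inner w (M x) + ((norm w)\<^sup>2 - 2 * inner w z) * Zx"
    proof -
      have j1: "integral\<^sup>L lborel (\<lambda>y. inner w (W x y *\<^sub>R y)) = inner w (M x)"
        unfolding M_def by (rule integral_inner_right) (rule int_Wy)
      have j2: "integral\<^sup>L lborel (\<lambda>y. ((norm w)\<^sup>2 - 2 * inner w z) * W x y) = ((norm w)\<^sup>2 - 2 * inner w z) * Zx"
        unfolding Zx_def Z_def using int_W[of x] by simp
      show ?thesis unfolding Bochner_Integration.integral_add[OF i1 i2] integral_mult_right_zero j1 j2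
        by (simp add: Zx_def Z_def)
    qed
    also have "\<dots> = Zx * (norm w)\<^sup>2" by (simp add: Mz algebra_simps)
    finally have I: "integral\<^sup>L lborel (\<lambda>y. 2 * inner w (W x y *\<^sub>R y) + ((norm w)\<^sup>2 - 2 * inner w z) * W x y)
        = Zx * (norm w)\<^sup>2" .
    have "integral\<^sup>L lborel (\<lambda>y. 2 * inner w (W x y *\<^sub>R y) + ((norm w)\<^sup>2 - 2 * inner w z) * W x y) \<le> Q"
      unfolding Q_def
    proof (rule integral_mono)
      show "integrable lborel (\<lambda>y. 2 * inner w (W x y *\<^sub>R y) + ((norm w)\<^sup>2 - 2 * inner w z) * W x y)"
        by (rule Bochner_Integration.integrable_add[OF i1 i2])
      show "integrable lborel (\<lambda>y. W x y * (norm (y - y0))\<^sup>2)" by (rule int_Wsq)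
      fix y
      have yy: "y - y0 = w + 1 *\<^sub>R (y - z)" by (simp add: w_def)
      have "(norm (y - y0))\<^sup>2 = (norm w)\<^sup>2 + 2 * inner w (y - z) + (norm (y - z))\<^sup>2"
        unfolding yy norm_add_scale by simp
      then have "2 * inner w y + ((norm w)\<^sup>2 - 2 * inner w z) \<le> (norm (y - y0))\<^sup>2"
        by (simp add: inner_diff_right)
      then have "W x y * (2 * inner w y + ((norm w)\<^sup>2 - 2 * inner w z)) \<le> W x y * (norm (y - y0))\<^sup>2"
        using W_pos[of x y] by (intro mult_left_mono) auto
      then show "2 * inner w (W x y *\<^sub>R y) + ((norm w)\<^sup>2 - 2 * inner w z) * W x y \<le> W x y * (norm (y - y0))\<^sup>2"
        by (simp add: algebra_simps)
    qed
    then show ?thesis using I by (simp add: w_def)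
  qed
  have A1z: "A1 = Zx * inner (y0 - x) (z - y0)"
    unfolding A1_def Mz by (simp add: inner_diff_right algebra_simps)
  have AQ: "A1 + Q \<ge> Zx * inner (z - x) (z - y0)"
  proof -
    have "inner (z - x) (z - y0) = inner (y0 - x) (z - y0) + (norm (z - y0))\<^sup>2"
    proof -
      have "z - x = (y0 - x) + (z - y0)" by simp
      then show ?thesis by (metis inner_add_left power2_norm_eq_inner)
    qed
    then have e: "Zx * inner (z - x) (z - y0) = Zx * inner (y0 - x) (z - y0) + Zx * (norm (z - y0))\<^sup>2"
      by (simp only: distrib_left)
    show ?thesis using Qz unfolding A1z e by linarith
  qed
  have J: "integral\<^sup>L lborel (\<lambda>y. W x y * f y) \<ge> Zx * f z"
    using jensen_W[of x] by (simp add: Zx_def z_def)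
  have "(Zx * f z - f y0 * Zx) / \<delta> + Zx * inner (z - x) (z - y0) / s \<le> Zx * d"
  proof -
    have "(Zx * f z - f y0 * Zx) / \<delta> \<le> A" unfolding AWf using J del by (simp add: divide_right_mono)
    moreover have "Zx * inner (z - x) (z - y0) / s \<le> (A1 + Q) / s" using AQ s_pos by (simp add: divide_right_mono)
    ultimately show ?thesis using Ld unfolding L_def by linarith
  qed
  then have "Zx * ((f z - f y0) / \<delta> + inner (z - x) (z - y0) / s) \<le> Zx * d"
    by (simp add: algebra_simps diff_divide_distrib)
  then have "(f z - f y0) / \<delta> + inner (z - x) (z - y0) / s \<le> d" using Zp by simp
  then have "\<delta> * ((f z - f y0) / \<delta> + inner (z - x) (z - y0) / s) \<le> \<delta> * d"
    using del by (intro mult_left_mono) auto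
  moreover have "\<delta> * ((f z - f y0) / \<delta> + inner (z - x) (z - y0) / s)
      = (f z - f y0) + inner (z - x) (z - y0) / lam"
    using del lam by (simp add: s_def field_simps)
  ultimately have "(f z - f y0) + inner (z - x) (z - y0) / lam \<le> d * \<delta>"
    by (simp add: mult.commute)
  moreover have "inner ((x - z) /\<^sub>R lam) (y0 - z) = inner (z - x) (z - y0) / lam"
  proof -
    have "inner (x - z) (y0 - z) = inner (z - x) (z - y0)"
      by (metis inner_minus_left inner_minus_right minus_diff_eq)
    then show ?thesis by (simp add: divide_inverse mult.commute)
  qed
  ultimately show ?thesis unfolding z_def[symmetric] d_def[symmetric] by linarith
qed

end


theorem theorem14:
  fixes f :: "'a::euclidean_space \<Rightarrow> real"
    and lam \<delta> :: real
    and xs :: "nat \<Rightarrow> 'a"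
  assumes lam: "lam > 0" and del: "\<delta> > 0"
    and cvx: "convex_on UNIV f"
    and cont: "continuous_on UNIV f"
    and minex: "\<exists>x0. \<forall>y. f x0 \<le> f y"
    and integ: "integrable lborel (\<lambda>y. exp (- f y / \<delta>))"
    and zoppa: "\<And>k. xs (Suc k) = zprox \<delta> lam f (xs k)"
  shows "(\<forall>x. \<exists>g. GDERIV (soft_moreau lam \<delta> f) x :> g
                \<and> g \<in> eps_subdiff f (real DIM('a) * \<delta>) (zprox \<delta> lam f x))
       \<and> (\<forall>k\<ge>1. \<exists>g. GDERIV (soft_moreau lam \<delta> f) (xs (k - 1)) :> g
                \<and> f (xs k) - (INF y. f y)
                    \<le> norm g * infdist (xs k) {z. \<forall>y. f z \<le> f y} + real DIM('a) * \<delta>)"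
proof -
  interpret zsetup f lam \<delta>
    using lam del cvx cont minex integ by unfold_locales
  have part1: "GDERIV (soft_moreau lam \<delta> f) x :> (x - zprox \<delta> lam f x) /\<^sub>R lam
      \<and> (x - zprox \<delta> lam f x) /\<^sub>R lam \<in> eps_subdiff f (real DIM('a) * \<delta>) (zprox \<delta> lam f x)" for x
    unfolding eps_subdiff_def using soft_grad[of x] key[where x=x] by auto
  show ?thesis
  proof (intro conjI allI impI)
    fix x show "\<exists>g. GDERIV (soft_moreau lam \<delta> f) x :> g
                \<and> g \<in> eps_subdiff f (real DIM('a) * \<delta>) (zprox \<delta> lam f x)"
      using part1[of x] by blast
  next
    fix k :: nat assume k: "1 \<le> k"
    define j where "j = k - 1"
    have kj: "xs k = zprox \<delta> lam f (xs j)" using k zoppa[of j] by (simp add: j_def)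
    define g where "g = (xs j - zprox \<delta> lam f (xs j)) /\<^sub>R lam"
    obtain x0 where x0: "\<And>y. f x0 \<le> f y" using minex by blast
    define X where "X = {z. \<forall>y. f z \<le> f y}"
    have Xeq: "X = {z. f z \<le> f x0}" unfolding X_def using x0 by (auto intro: order_trans)
    have clX: "closed X" unfolding Xeq
      by (intro closed_Collect_le cont continuous_on_const)
    have neX: "X \<noteq> {}" using x0 by (auto simp: X_def)
    obtain p where p: "p \<in> X" "infdist (xs k) X = dist (xs k) p"
      using infdist_attains_inf[OF clX neX] by blast
    have INF: "(INF y. f y) = f p"
      using p(1) by (intro cInf_eq_minimum) (auto simp: X_def)
    have "f p \<ge> f (xs k) + inner g (p - xs k) - real DIM('a) * \<delta>"
      using key[of "xs j" p] by (simp add: g_def kj)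
    then have "f (xs k) - f p \<le> inner g (xs k - p) + real DIM('a) * \<delta>"
      by (simp add: inner_diff_right)
    also have "inner g (xs k - p) \<le> norm g * norm (xs k - p)" by (rule norm_cauchy_schwarz)
    finally have "f (xs k) - f p \<le> norm g * infdist (xs k) X + real DIM('a) * \<delta>"
      using p(2) by (simp add: dist_norm)
    then show "\<exists>g. GDERIV (soft_moreau lam \<delta> f) (xs (k - 1)) :> g
                \<and> f (xs k) - (INF y. f y)
                    \<le> norm g * infdist (xs k) {z. \<forall>y. f z \<le> f y} + real DIM('a) * \<delta>"
      using part1[of "xs j"] unfolding INF X_def g_def j_def by blast
  qed
qed


end
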